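(* Let $(X,\mathcal{B})$ be a $t$-$(v,k,1)$-design (with $2\le t<k<v$) and let $B \in \mathcal{B}$. Let $p$ be the probability that a block is available and $q = 1-p$. Then \[\mathcal{R}(p) = 1 + \sum_{i=1}^{k} (-1)^{i}\binom{k}{i} q^{e_i},\] where $r_j = \binom{v-j}{t-j}\big/\binom{k-j}{t-j}$ for $1 \le j \le t$, and \[e_i = \sum_{j=1}^{\min\{i,t-1\}} (-1)^{j+1}\binom{i}{j}(r_j - 1), \quad 1 \le i \le k.\]
   Context: A $t$-$(v,k,\lambda)$-design is a set $X$ of $v$ points together with a collection $\mathcal{B}$ of $k$-subsets of $X$ (blocks) such that every $t$-subset of $X$ lies in exactly $\lambda$ blocks; for $\lambda=1$, $r_j$ as given is the number of blocks containing any fixed set of $j$ points. Reliability model: fix a block $B\in\mathcal{B}$. A repair set for $B$ is a subset $\mathcal{P}\subseteq \mathcal{B}\setminus\{B\}$ with $B \subseteq \bigcup_{B'\in\mathcal{P}} B'$. Each block of $\mathcal{B}\setminus\{B\}$ is, independently of the others, available with probability $p\in[0,1]$; a repair set is available if all of its blocks are available. $\mathcal{R}(p)$ is the probability that at least one available repair set for $B$ exists. *)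

theory Defs
  imports Complex_Main
begin

definition t_design :: "'a set \<Rightarrow> 'a set set \<Rightarrow> nat \<Rightarrow> nat \<Rightarrow> nat \<Rightarrow> nat \<Rightarrow> bool" where
  "t_design X Bs t v k lam \<longleftrightarrow>
     finite X \<and> card X = v \<and>
     (\<forall>B\<in>Bs. B \<subseteq> X \<and> card B = k) \<and>
     (\<forall>T. T \<subseteq> X \<longrightarrow> card T = t \<longrightarrow> card {B\<in>Bs. T \<subseteq> B} = lam)"

definition repair_set :: "'a set set \<Rightarrow> 'a set \<Rightarrow> 'a set set \<Rightarrow> bool" where
  "repair_set Bs B P \<longleftrightarrow> P \<subseteq> Bs - {B} \<and> B \<subseteq> \<Union>P"

text \<open>Reliability: each block of Bs - {B} is independently available with probability p;
  the probability that the (random) set A of available blocks contains some repair set.\<close>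
definition reliability :: "'a set set \<Rightarrow> 'a set \<Rightarrow> real \<Rightarrow> real" where
  "reliability Bs B p =
     (\<Sum>A\<in>Pow (Bs - {B}).
        p ^ card A * (1 - p) ^ card (Bs - {B} - A) *
        (if \<exists>P. P \<subseteq> A \<and> repair_set Bs B P then 1 else 0))"

definition r_num :: "nat \<Rightarrow> nat \<Rightarrow> nat \<Rightarrow> nat \<Rightarrow> real" where
  "r_num v k t j = real ((v - j) choose (t - j)) / real ((k - j) choose (t - j))"

definition e_exp :: "nat \<Rightarrow> nat \<Rightarrow> nat \<Rightarrow> nat \<Rightarrow> real" where
  "e_exp v k t i = (\<Sum>j=1..min i (t - 1). (-1) ^ (j + 1) * real (i choose j) * (r_num v k t j - 1))"

end

theory Submission
  imports Defs
begin


lemma sum_Pow_card: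
  fixes f :: "nat \<Rightarrow> real"
  assumes "finite S"
  shows "(\<Sum>J\<in>Pow S. f (card J)) = (\<Sum>j=0..card S. real (card S choose j) * f j)"
proof -
  have "(\<Sum>J\<in>Pow S. f (card J)) = (\<Sum>y\<in>{0..card S}. \<Sum>J\<in>{x. x \<in> Pow S \<and> card x = y}. f (card J))"
    by (rule sum.group[symmetric]) (auto simp: assms card_mono)
  also have "\<dots> = (\<Sum>j=0..card S. real (card S choose j) * f j)"
  proof (rule sum.cong[OF refl])
    fix y assume "y \<in> {0..card S}"
    have "(\<Sum>J\<in>{x. x \<in> Pow S \<and> card x = y}. f (card J)) = (\<Sum>J\<in>{x. x \<subseteq> S \<and> card x = y}. f y)"
      by (rule sum.cong) auto
    also have "\<dots> = real (card S choose y) * f y"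
      using n_subsets[OF assms, of y] by simp
    finally show "(\<Sum>J\<in>{x. x \<in> Pow S \<and> card x = y}. f (card J)) = real (card S choose y) * f y" .
  qed
  finally show ?thesis .
qed

lemma alt_sum:
  assumes "finite U"
  shows "(\<Sum>S\<in>Pow U. (-1::real) ^ card S) = (if U = {} then 1 else 0)"
proof -
  have "(\<Sum>S\<in>Pow U. (-1::real) ^ card S) = (\<Sum>j=0..card U. real (card U choose j) * (-1)^j)"
    using sum_Pow_card[OF assms, of "\<lambda>j. (-1)^j"] .
  also have "\<dots> = (\<Sum>j\<le>card U. (-1)^j * real (card U choose j))"
    by (simp add: atLeast0AtMost mult.commute)
  also have "\<dots> = (if U = {} then 1 else 0)"
    using choose_alternating_sum[of "card U", where 'a=real] assms by (auto simp: card_gt_0_iff)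
  finally show ?thesis .
qed

lemma prod_sum_w:
  fixes p q :: real
  assumes "finite Ob" "M \<subseteq> Ob" "p + q = 1"
  shows "(\<Sum>A\<in>Pow Ob. if A \<inter> M = {} then p ^ card A * q ^ card (Ob - A) else 0) = q ^ card M"
proof -
  have fin: "finite (Ob - M)" using assms by auto
  have "(\<Sum>A\<in>Pow Ob. if A \<inter> M = {} then p ^ card A * q ^ card (Ob - A) else 0)
      = (\<Sum>A\<in>{A\<in>Pow Ob. A \<inter> M = {}}. p ^ card A * q ^ card (Ob - A))"
    by (rule sum.inter_filter[symmetric]) (use assms in auto)
  also have "{A\<in>Pow Ob. A \<inter> M = {}} = Pow (Ob - M)" by auto
  also have "(\<Sum>A\<in>Pow (Ob - M). p ^ card A * q ^ card (Ob - A))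
      = (\<Sum>A\<in>Pow (Ob - M). q ^ card M * ((\<Prod>x\<in>A. p) * (\<Prod>x\<in>(Ob - M) - A. q)))"
  proof (rule sum.cong[OF refl])
    fix A assume A: "A \<in> Pow (Ob - M)"
    have "Ob - A = (Ob - M - A) \<union> M" using A assms by auto
    moreover have "card ((Ob - M - A) \<union> M) = card (Ob - M - A) + card M"
      by (rule card_Un_disjoint) (use assms in \<open>auto intro: finite_subset\<close>)
    ultimately show "p ^ card A * q ^ card (Ob - A) = q ^ card M * ((\<Prod>x\<in>A. p) * (\<Prod>x\<in>(Ob - M) - A. q))"
      by (simp add: power_add)
  qed
  also have "\<dots> = q ^ card M * (\<Prod>x\<in>Ob - M. p + q)"
    by (simp only: sum_distrib_left[symmetric] prod_add[OF fin])
  also have "\<dots> = q ^ card M" using assms by simp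
  finally show ?thesis .
qed

lemma count_super:
  assumes "finite Y" "J \<subseteq> Y" "card J = j" "j \<le> t"
  shows "card {T. J \<subseteq> T \<and> T \<subseteq> Y \<and> card T = t} = (card Y - j) choose (t - j)"
proof -
  have fJ: "finite J" using assms finite_subset by blast
  have h1: "\<forall>a\<in>{T. J \<subseteq> T \<and> T \<subseteq> Y \<and> card T = t}. a - J \<union> J = a" by auto
  have h2: "\<forall>a'\<in>{U. U \<subseteq> Y - J \<and> card U = t - j}. a' \<union> J - J = a'" by auto
  have h3: "(\<lambda>T. T - J) ` {T. J \<subseteq> T \<and> T \<subseteq> Y \<and> card T = t} \<subseteq> {U. U \<subseteq> Y - J \<and> card U = t - j}"
      using assms fJ by (auto simp: card_Diff_subset)
  have h4: "(\<lambda>U. U \<union> J) ` {U. U \<subseteq> Y - J \<and> card U = t - j} \<subseteq> {T. J \<subseteq> T \<and> T \<subseteq> Y \<and> card T = t}"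
  proof (rule image_subsetI)
      fix U assume "U \<in> {U. U \<subseteq> Y - J \<and> card U = t - j}"
      then have U: "U \<subseteq> Y - J" "card U = t - j" by auto
      have "finite U" using U assms finite_subset by blast
      then have "card (U \<union> J) = card U + card J" using U fJ by (intro card_Un_disjoint) auto
      then show "U \<union> J \<in> {T. J \<subseteq> T \<and> T \<subseteq> Y \<and> card T = t}" using U assms by auto
  qed
  have "bij_betw (\<lambda>T. T - J) {T. J \<subseteq> T \<and> T \<subseteq> Y \<and> card T = t} {U. U \<subseteq> Y - J \<and> card U = t - j}"
    by (rule bij_betw_byWitness[OF h1 h2 h3 h4])
  then have "card {T. J \<subseteq> T \<and> T \<subseteq> Y \<and> card T = t} = card {U. U \<subseteq> Y - J \<and> card U = t - j}"
    by (rule bij_betw_same_card)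
  also have "\<dots> = card (Y - J) choose (t - j)" using assms by (intro n_subsets) auto
  also have "card (Y - J) = card Y - j" using assms fJ by (simp add: card_Diff_subset)
  finally show ?thesis .
qed



lemma card_filter_sum: "finite A \<Longrightarrow> card {x\<in>A. P x} = (\<Sum>x\<in>A. if P x then 1 else 0::nat)"
  using sum.inter_filter[of A "\<lambda>_. 1::nat" P] by simp

lemma design_count:
  assumes des: "t_design X Bs t v k 1" and J: "J \<subseteq> X" "card J = j" "j \<le> t" "t \<le> k"
  shows "card {C\<in>Bs. J \<subseteq> C} * ((k - j) choose (t - j)) = (v - j) choose (t - j)"
proof -
  have finX: "finite X" and cX: "card X = v" and blk: "\<And>C. C \<in> Bs \<Longrightarrow> C \<subseteq> X \<and> card C = k"
    and tt: "\<And>T. T \<subseteq> X \<Longrightarrow> card T = t \<Longrightarrow> card {C\<in>Bs. T \<subseteq> C} = 1"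
    using des unfolding t_design_def by auto
  have fBs: "finite Bs" proof (rule finite_subset[of _ "Pow X"])
    show "Bs \<subseteq> Pow X" using blk by auto
  qed (use finX in simp)
  define TX where "TX = {T. J \<subseteq> T \<and> T \<subseteq> X \<and> card T = t}"
  define BJ where "BJ = {C\<in>Bs. J \<subseteq> C}"
  have fTX: "finite TX" unfolding TX_def by (rule finite_subset[of _ "Pow X"]) (use finX in auto)
  have fBJ: "finite BJ" unfolding BJ_def using fBs by auto
  have "card BJ * ((k - j) choose (t - j)) = (\<Sum>C\<in>BJ. card {T. J \<subseteq> T \<and> T \<subseteq> C \<and> card T = t})"
  proof -
    have "\<And>C. C \<in> BJ \<Longrightarrow> card {T. J \<subseteq> T \<and> T \<subseteq> C \<and> card T = t} = (k - j) choose (t - j)"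
    proof -
      fix C assume C: "C \<in> BJ"
      then have "C \<subseteq> X" "card C = k" "J \<subseteq> C" using blk unfolding BJ_def by auto
      moreover have "finite C" using finX by (rule finite_subset[OF \<open>C \<subseteq> X\<close>])
      ultimately show "card {T. J \<subseteq> T \<and> T \<subseteq> C \<and> card T = t} = (k - j) choose (t - j)"
        using count_super[of C J j t] J by simp
    qed
    then show ?thesis by simp
  qed
  also have "\<dots> = (\<Sum>C\<in>BJ. \<Sum>T\<in>TX. if T \<subseteq> C then 1 else 0)"
  proof (rule sum.cong[OF refl])
    fix C assume C: "C \<in> BJ"
    then have "C \<subseteq> X" using blk unfolding BJ_def by auto
    then have "{T. J \<subseteq> T \<and> T \<subseteq> C \<and> card T = t} = {T\<in>TX. T \<subseteq> C}" unfolding TX_def by auto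
    then show "card {T. J \<subseteq> T \<and> T \<subseteq> C \<and> card T = t} = (\<Sum>T\<in>TX. if T \<subseteq> C then 1 else 0)"
      by (simp only: card_filter_sum[OF fTX])
  qed
  also have "\<dots> = (\<Sum>T\<in>TX. \<Sum>C\<in>BJ. if T \<subseteq> C then 1 else 0)" by (rule sum.swap)
  also have "\<dots> = (\<Sum>T\<in>TX. 1)"
  proof (rule sum.cong[OF refl])
    fix T assume T: "T \<in> TX"
    have "(\<Sum>C\<in>BJ. if T \<subseteq> C then 1 else 0) = card {C\<in>BJ. T \<subseteq> C}"
      by (rule card_filter_sum[OF fBJ, symmetric])
    also have "{C\<in>BJ. T \<subseteq> C} = {C\<in>Bs. T \<subseteq> C}" using T unfolding TX_def BJ_def by auto
    also have "card \<dots> = 1" using T tt unfolding TX_def by auto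
    finally show "(\<Sum>C\<in>BJ. if T \<subseteq> C then 1 else (0::nat)) = 1" .
  qed
  also have "\<dots> = card TX" by simp
  also have "\<dots> = (v - j) choose (t - j)" unfolding TX_def using count_super[OF finX J(1-3)] cX by simp
  finally show ?thesis unfolding BJ_def .
qed



lemma blocks_through:
  assumes des: "t_design X Bs t v k 1" and tk: "t \<le> k" and BB: "B \<in> Bs"
    and J: "J \<subseteq> B" "J \<noteq> {}"
  shows "real (card {C\<in>Bs - {B}. J \<subseteq> C}) = r_num v k t (card J) - 1"
proof -
  have finX: "finite X" and blk: "\<And>C. C \<in> Bs \<Longrightarrow> C \<subseteq> X \<and> card C = k"
    and tt: "\<And>T. T \<subseteq> X \<Longrightarrow> card T = t \<Longrightarrow> card {C\<in>Bs. T \<subseteq> C} = 1"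
    using des unfolding t_design_def by auto
  have fBs: "finite Bs"
  proof (rule finite_subset[of _ "Pow X"])
    show "Bs \<subseteq> Pow X" using blk by auto
  qed (use finX in simp)
  have BX: "B \<subseteq> X" "card B = k" using blk BB by auto
  have fB: "finite B" using BX finX by (simp add: finite_subset)
  have JX: "J \<subseteq> X" using J BX by auto
  have eq: "{C\<in>Bs - {B}. J \<subseteq> C} = {C\<in>Bs. J \<subseteq> C} - {B}" by auto
  have Bin: "B \<in> {C\<in>Bs. J \<subseteq> C}" using BB J by auto
  have fin: "finite {C\<in>Bs. J \<subseteq> C}" using fBs by auto
  show ?thesis
  proof (cases "card J \<le> t")
    case True
    have pos: "0 < (k - card J) choose (t - card J)" using True tk by simp
    have c: "card {C\<in>Bs. J \<subseteq> C} * ((k - card J) choose (t - card J)) = (v - card J) choose (t - card J)"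
      using design_count[OF des JX refl True tk] .
    have "real (card {C\<in>Bs. J \<subseteq> C}) = r_num v k t (card J)"
      unfolding r_num_def using pos c[THEN arg_cong[where f=real]]
      by (simp add: field_simps)
    moreover have "card {C\<in>Bs. J \<subseteq> C} \<ge> 1" using Bin fin
      by (metis One_nat_def Suc_leI card_gt_0_iff empty_iff)
    ultimately show ?thesis unfolding eq using Bin fin by (simp add: of_nat_diff)
  next
    case False
    then obtain T where T: "T \<subseteq> J" "card T = t" by (meson nat_le_linear obtain_subset_with_card_n)
    have "card {C\<in>Bs. T \<subseteq> C} = 1" using tt T JX by auto
    moreover have "B \<in> {C\<in>Bs. T \<subseteq> C}" using Bin T by auto
    ultimately have one: "{C\<in>Bs. T \<subseteq> C} = {B}" by (metis card_1_singletonE singletonD)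
    have e1: "{C\<in>Bs - {B}. J \<subseteq> C} = {}" using one T by auto
    have e2: "r_num v k t (card J) = 1" using False unfolding r_num_def by simp
    show ?thesis unfolding e1 e2 by simp
  qed
qed

lemma r1_gt:
  assumes "2 \<le> t" "t < k" "k < v"
  shows "r_num v k t 1 > 1"
proof -
  define a m where "a = k - 1" and "m = t - 1"
  have m1: "m \<ge> 1" "m \<le> a" using assms unfolding a_def m_def by auto
  have "Suc a choose m = (a choose (m - 1)) + (a choose m)"
    using choose_reduce_nat[of "Suc a" m] m1 by simp
  moreover have "0 < a choose (m - 1)" using m1 by simp
  ultimately have "a choose m < Suc a choose m" by simp
  also have "\<dots> \<le> (v - 1) choose m" using assms unfolding a_def by (intro binomial_right_mono) auto
  finally have lt: "a choose m < (v - 1) choose m" .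
  have pos: "0 < a choose m" using m1 by simp
  show ?thesis unfolding r_num_def using lt pos unfolding a_def m_def
    by (simp add: field_simps)
qed



lemma ind_nonempty:
  assumes "finite S"
  shows "(if C \<inter> S \<noteq> {} then 1 else 0::real)
       = (\<Sum>J\<in>Pow S. if J \<noteq> {} \<and> J \<subseteq> C then (-1) ^ (card J + 1) else 0)"
proof -
  have fP: "finite (Pow (S \<inter> C))" using assms by simp
  have "(\<Sum>J\<in>Pow S. if J \<noteq> {} \<and> J \<subseteq> C then (-1::real) ^ (card J + 1) else 0)
      = (\<Sum>J\<in>{J\<in>Pow S. J \<noteq> {} \<and> J \<subseteq> C}. (-1) ^ (card J + 1))"
    by (rule sum.inter_filter[symmetric]) (use assms in simp)
  also have "{J\<in>Pow S. J \<noteq> {} \<and> J \<subseteq> C} = Pow (S \<inter> C) - {{}}" by auto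
  also have "(\<Sum>J\<in>Pow (S \<inter> C) - {{}}. (-1::real) ^ (card J + 1))
      = - (\<Sum>J\<in>Pow (S \<inter> C) - {{}}. (-1) ^ card J)"
    by (simp add: sum_negf[symmetric])
  also have "(\<Sum>J\<in>Pow (S \<inter> C) - {{}}. (-1::real) ^ card J) = (\<Sum>J\<in>Pow (S \<inter> C). (-1) ^ card J) - 1"
    using sum.remove[OF fP, of "{}" "\<lambda>J. (-1::real) ^ card J"] by simp
  also have "(\<Sum>J\<in>Pow (S \<inter> C). (-1::real) ^ card J) = (if S \<inter> C = {} then 1 else 0)"
    using alt_sum[of "S \<inter> C"] assms by simp
  finally show ?thesis by auto
qed

lemma cardM:
  assumes des: "t_design X Bs t v k 1" and tk: "t \<le> k" and BB: "B \<in> Bs"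
    and S: "S \<subseteq> B"
  shows "real (card {C\<in>Bs - {B}. C \<inter> S \<noteq> {}}) = e_exp v k t (card S)"
proof -
  have finX: "finite X" and blk: "\<And>C. C \<in> Bs \<Longrightarrow> C \<subseteq> X \<and> card C = k"
    using des unfolding t_design_def by auto
  have fBs: "finite Bs"
  proof (rule finite_subset[of _ "Pow X"])
    show "Bs \<subseteq> Pow X" using blk by auto
  qed (use finX in simp)
  have BX: "B \<subseteq> X" "card B = k" using blk BB by auto
  have fS: "finite S" using S BX finX by (meson finite_subset)
  have cS: "card S \<le> k" using S BX finX by (metis card_mono finite_subset)
  define Ob where "Ob = Bs - {B}"
  have fO: "finite Ob" unfolding Ob_def using fBs by simp
  define F where "F j = (if j = 0 then 0 else (-1) ^ (j + 1) * (r_num v k t j - 1))" for j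
  have "real (card {C\<in>Ob. C \<inter> S \<noteq> {}}) = (\<Sum>C\<in>Ob. if C \<inter> S \<noteq> {} then 1 else 0)"
    using sum.inter_filter[OF fO, of "\<lambda>_. 1::real" "\<lambda>C. C \<inter> S \<noteq> {}"] by simp
  also have "\<dots> = (\<Sum>C\<in>Ob. \<Sum>J\<in>Pow S. if J \<noteq> {} \<and> J \<subseteq> C then (-1) ^ (card J + 1) else 0)"
    using ind_nonempty[OF fS] by simp
  also have "\<dots> = (\<Sum>J\<in>Pow S. \<Sum>C\<in>Ob. if J \<noteq> {} \<and> J \<subseteq> C then (-1) ^ (card J + 1) else 0)"
    by (rule sum.swap)
  also have "\<dots> = (\<Sum>J\<in>Pow S. F (card J))"
  proof (rule sum.cong[OF refl])
    fix J assume J: "J \<in> Pow S"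
    show "(\<Sum>C\<in>Ob. if J \<noteq> {} \<and> J \<subseteq> C then (-1) ^ (card J + 1) else 0) = F (card J)"
    proof (cases "J = {}")
      case True then show ?thesis by (simp add: F_def)
    next
      case False
      have fJ: "finite J" using J fS finite_subset by blast
      then have cJ: "card J \<noteq> 0" using False by simp
      have "(\<Sum>C\<in>Ob. if J \<noteq> {} \<and> J \<subseteq> C then (-1::real) ^ (card J + 1) else 0)
          = (\<Sum>C\<in>Ob. if J \<subseteq> C then (-1::real) ^ (card J + 1) else 0)" using False by simp
      also have "\<dots> = (\<Sum>C\<in>{C\<in>Ob. J \<subseteq> C}. (-1::real) ^ (card J + 1))"
        by (rule sum.inter_filter[symmetric, OF fO])
      also have "\<dots> = (-1) ^ (card J + 1) * real (card {C\<in>Ob. J \<subseteq> C})" by simp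
      also have "real (card {C\<in>Ob. J \<subseteq> C}) = r_num v k t (card J) - 1"
        unfolding Ob_def using blocks_through[OF des tk BB] J S False by auto
      finally show ?thesis using cJ by (simp add: F_def)
    qed
  qed
  also have "\<dots> = (\<Sum>j=0..card S. real (card S choose j) * F j)"
    by (rule sum_Pow_card[OF fS])
  also have "\<dots> = (\<Sum>j=1..card S. real (card S choose j) * F j)"
    by (simp add: sum.atLeast_Suc_atMost F_def)
  also have "\<dots> = (\<Sum>j=1..min (card S) (t - 1). real (card S choose j) * F j)"
  proof (rule sum.mono_neutral_left[symmetric])
    show "\<forall>i\<in>{1..card S} - {1..min (card S) (t - 1)}. real (card S choose i) * F i = 0"
    proof
      fix i assume "i \<in> {1..card S} - {1..min (card S) (t - 1)}"
      then have "t \<le> i" "i \<noteq> 0" by auto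
      then have "r_num v k t i = 1" unfolding r_num_def by simp
      then show "real (card S choose i) * F i = 0" using \<open>i \<noteq> 0\<close> by (simp add: F_def)
    qed
  qed auto
  also have "\<dots> = e_exp v k t (card S)"
    unfolding e_exp_def by (rule sum.cong[OF refl]) (simp add: F_def)
  finally show ?thesis unfolding Ob_def .
qed



theorem mainTheorem10:
  fixes X :: "'a set" and Bs :: "'a set set" and B :: "'a set"
    and t v k :: nat and p :: real
  assumes "t_design X Bs t v k 1"
    and "2 \<le> t" and "t < k" and "k < v"
    and "B \<in> Bs"
    and "0 \<le> p" and "p \<le> 1"
  shows "reliability Bs B p =
           1 + (\<Sum>i=1..k. (-1) ^ i * real (k choose i) * (1 - p) powr (e_exp v k t i))"
proof -
  note des = assms(1) and BB = assms(5)
  have tk: "t \<le> k" using assms by simp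
  have finX: "finite X" and blk: "\<And>C. C \<in> Bs \<Longrightarrow> C \<subseteq> X \<and> card C = k"
    using des unfolding t_design_def by auto
  have fBs: "finite Bs"
  proof (rule finite_subset[of _ "Pow X"])
    show "Bs \<subseteq> Pow X" using blk by auto
  qed (use finX in simp)
  have BX: "B \<subseteq> X" "card B = k" using blk BB by auto
  have fB: "finite B" using BX finX by (meson finite_subset)
  define Ob where "Ob = Bs - {B}"
  have fO: "finite Ob" unfolding Ob_def using fBs by simp
  define q where "q = 1 - p"
  have q0: "q \<ge> 0" and pq: "p + q = 1" using assms unfolding q_def by auto
  define M where "M S = {C\<in>Ob. C \<inter> S \<noteq> {}}" for S
  define w where "w A = p ^ card A * q ^ card (Ob - A)" for A
  define G where "G i = (if i = 0 then 1 else (-1) ^ i * q powr e_exp v k t i)" for i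
  have "reliability Bs B p = (\<Sum>A\<in>Pow Ob. w A * (if B \<subseteq> \<Union>A then 1 else 0))"
    unfolding reliability_def
  proof (rule sum.cong)
    show "Pow (Bs - {B}) = Pow Ob" unfolding Ob_def ..
    fix A assume A: "A \<in> Pow Ob"
    have "(\<exists>P. P \<subseteq> A \<and> repair_set Bs B P) \<longleftrightarrow> B \<subseteq> \<Union>A"
      using A unfolding repair_set_def Ob_def by blast
    then show "p ^ card A * (1 - p) ^ card (Bs - {B} - A) * (if \<exists>P. P \<subseteq> A \<and> repair_set Bs B P then 1 else 0)
        = w A * (if B \<subseteq> \<Union>A then 1 else 0)"
      unfolding w_def q_def Ob_def by simp
  qed
  also have "\<dots> = (\<Sum>A\<in>Pow Ob. w A * (\<Sum>S\<in>Pow B. if A \<inter> M S = {} then (-1) ^ card S else 0))"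
  proof (rule sum.cong[OF refl])
    fix A assume A: "A \<in> Pow Ob"
    have "(\<Sum>S\<in>Pow B. if A \<inter> M S = {} then (-1::real) ^ card S else 0)
        = (\<Sum>S\<in>{S\<in>Pow B. A \<inter> M S = {}}. (-1) ^ card S)"
      by (rule sum.inter_filter[symmetric]) (use fB in simp)
    also have "{S\<in>Pow B. A \<inter> M S = {}} = Pow (B - \<Union>A)"
      using A unfolding M_def by auto
    also have "(\<Sum>S\<in>Pow (B - \<Union>A). (-1::real) ^ card S) = (if B \<subseteq> \<Union>A then 1 else 0)"
      using alt_sum[of "B - \<Union>A"] fB by simp
    finally show "w A * (if B \<subseteq> \<Union>A then 1 else 0)
        = w A * (\<Sum>S\<in>Pow B. if A \<inter> M S = {} then (-1) ^ card S else 0)" by simp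
  qed
  also have "\<dots> = (\<Sum>A\<in>Pow Ob. \<Sum>S\<in>Pow B. (-1) ^ card S * (if A \<inter> M S = {} then w A else 0))"
    by (simp add: sum_distrib_left mult.commute if_distrib cong: if_cong)
  also have "\<dots> = (\<Sum>S\<in>Pow B. \<Sum>A\<in>Pow Ob. (-1) ^ card S * (if A \<inter> M S = {} then w A else 0))"
    by (rule sum.swap)
  also have "\<dots> = (\<Sum>S\<in>Pow B. (-1) ^ card S * q ^ card (M S))"
  proof (rule sum.cong[OF refl])
    fix S assume "S \<in> Pow B"
    have "(\<Sum>A\<in>Pow Ob. if A \<inter> M S = {} then w A else 0) = q ^ card (M S)"
      unfolding w_def by (rule prod_sum_w[OF fO _ pq]) (auto simp: M_def)
    then show "(\<Sum>A\<in>Pow Ob. (-1) ^ card S * (if A \<inter> M S = {} then w A else 0)) = (-1) ^ card S * q ^ card (M S)"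
      by (simp add: sum_distrib_left[symmetric])
  qed
  also have "\<dots> = (\<Sum>S\<in>Pow B. G (card S))"
  proof (rule sum.cong[OF refl])
    fix S assume S: "S \<in> Pow B"
    have fS: "finite S" using S fB by (meson PowD finite_subset)
    have cM: "real (card (M S)) = e_exp v k t (card S)"
      unfolding M_def Ob_def using cardM[OF des tk BB] S by simp
    show "(-1) ^ card S * q ^ card (M S) = G (card S)"
    proof (cases "S = {}")
      case True
      then show ?thesis unfolding M_def G_def by simp
    next
      case False
      then have c0: "card S \<noteq> 0" using fS by simp
      then obtain x where x: "x \<in> S" using False by blast
      have "real (card {C\<in>Bs - {B}. {x} \<subseteq> C}) = r_num v k t (card {x}) - 1"
        using blocks_through[OF des tk BB, of "{x}"] S x by auto
      then have "real (card {C\<in>Bs - {B}. {x} \<subseteq> C}) > 0" using r1_gt[OF assms(2-4)] by simp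
      then have "card {C\<in>Bs - {B}. {x} \<subseteq> C} > 0" by simp
      moreover have "card {C\<in>Bs - {B}. {x} \<subseteq> C} \<le> card (M S)"
        by (rule card_mono) (use fO x in \<open>auto simp: M_def Ob_def\<close>)
      ultimately have pos: "card (M S) \<noteq> 0" by simp
      have "q ^ card (M S) = q powr e_exp v k t (card S)"
        using powr_realpow'[OF q0 pos] cM by simp
      then show ?thesis unfolding G_def using c0 by simp
    qed
  qed
  also have "\<dots> = (\<Sum>i=0..k. real (k choose i) * G i)"
    using sum_Pow_card[OF fB, of G] BX by simp
  also have "\<dots> = 1 + (\<Sum>i=1..k. real (k choose i) * G i)"
    by (simp add: sum.atLeast_Suc_atMost G_def)
  also have "(\<Sum>i=1..k. real (k choose i) * G i) = (\<Sum>i=1..k. (-1) ^ i * real (k choose i) * (1 - p) powr (e_exp v k t i))"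
    by (rule sum.cong[OF refl]) (simp add: G_def q_def)
  finally show ?thesis .
qed

end
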